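(* Let $G$ be a group with identity $e$ and let $A$ be a finite set with $|A|\ge 2$. Let $S\subseteq G$ be a finite subset with $e\in S$ and $|S|\ge 2$, and let $\mu:A^S\to A$ be a local map, generated by the pair $(\mathcal P,f)$. Then: (1) If $|\mathcal P|\neq |A|^{|S|}-|A|^{|S|-1}$, then $e\in\mathrm{mms}(\mu)$. (2) If $|\mathcal P|$ is not a multiple of $|A|$, then $\mathrm{mms}(\mu)=S$. (3) If $|S|\ge 3$, $f$ is well-behaved and $|\mathcal P|=|A|$, then $\mathrm{mms}(\mu)=S$ or $\mathrm{mms}(\mu)=S\setminus\{s\}$ for some $s\in S\setminus\{e\}$.
   Context: For a finite $S\subseteq G$, $A^S$ denotes the set of all functions $S\to A$ (patterns), and $A^G$ the set of all functions $G\to A$ (configurations). The shift action of $G$ on $A^G$ is $(g\cdot x)(h)=x(g^{-1}h)$. A local map $\mu:A^S\to A$ defines the cellular automaton $\tau:A^G\to A^G$, $\tau(x)(g)=\mu((g^{-1}\cdot x)|_S)$ for all $x\in A^G$, $g\in G$. A finite set $T\subseteq G$ is a memory set of $\tau$ if some local map $A^T\to A$ defines $\tau$. The minimal memory set $\mathrm{mms}(\mu)$ is the intersection of all memory sets of the cellular automaton defined by $\mu$. The pair $(\mathcal P,f)$ generates $\mu$ if $\mathcal P=\{z\in A^S:\mu(z)\neq z(e)\}$ and $f:\mathcal P\to A$ is the restriction of $\mu$ to $\mathcal P$. The function $f$ is well-behaved if for all $p,q\in\mathcal P$: $p(e)=q(e)$ if and only if $f(p)=f(q)$. *)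

theory Defs
  imports "HOL-Library.FuncSet" "HOL-Library.Cardinality"
begin

(*The group G is a type of class group_add (written additively, not necessarily
commutative); its identity e is 0. The alphabet A is a finite type 'a.
Patterns in A^S are extensional functions in PiE S UNIV; a local map is a function on
patterns (only its values on PiE S UNIV matter). *)

definition shift :: "'g::group_add \<Rightarrow> ('g \<Rightarrow> 'a) \<Rightarrow> ('g \<Rightarrow> 'a)" where
  "shift g x = (\<lambda>h. x (- g + h))"

definition ca :: "'g::group_add set \<Rightarrow> (('g \<Rightarrow> 'a) \<Rightarrow> 'a) \<Rightarrow> ('g \<Rightarrow> 'a) \<Rightarrow> ('g \<Rightarrow> 'a)" where
  "ca S mu x = (\<lambda>g. mu (restrict (shift (- g) x) S))"

definition memory_set :: "(('g::group_add \<Rightarrow> 'a) \<Rightarrow> ('g \<Rightarrow> 'a)) \<Rightarrow> 'g set \<Rightarrow> bool" where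
  "memory_set tau T \<longleftrightarrow> finite T \<and> (\<exists>mu'. ca T mu' = tau)"

definition mms :: "'g::group_add set \<Rightarrow> (('g \<Rightarrow> 'a) \<Rightarrow> 'a) \<Rightarrow> 'g set" where
  "mms S mu = \<Inter> {T. memory_set (ca S mu) T}"

definition generates ::
  "('g::group_add \<Rightarrow> 'a) set \<Rightarrow> (('g \<Rightarrow> 'a) \<Rightarrow> 'a) \<Rightarrow> 'g set \<Rightarrow> (('g \<Rightarrow> 'a) \<Rightarrow> 'a) \<Rightarrow> bool" where
  "generates P f S mu \<longleftrightarrow>
     P = {z \<in> S \<rightarrow>\<^sub>E (UNIV :: 'a set). mu z \<noteq> z 0} \<and> (\<forall>p\<in>P. f p = mu p)"

definition well_behaved :: "('g::group_add \<Rightarrow> 'a) set \<Rightarrow> (('g \<Rightarrow> 'a) \<Rightarrow> 'a) \<Rightarrow> bool" where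
  "well_behaved P f \<longleftrightarrow> (\<forall>p\<in>P. \<forall>q\<in>P. p 0 = q 0 \<longleftrightarrow> f p = f q)"

end

theory Submission
  imports Defs
begin

definition ess :: "'g::group_add set \<Rightarrow> (('g \<Rightarrow> 'a) \<Rightarrow> 'a) \<Rightarrow> 'g \<Rightarrow> bool" where
  "ess S mu s \<longleftrightarrow> (\<exists>z \<in> S \<rightarrow>\<^sub>E (UNIV::'a set). \<exists>b. mu z \<noteq> mu (z(s:=b)))"

lemma mms_sub:
  assumes "finite S"
  shows "mms S mu \<subseteq> S"
proof -
  have "memory_set (ca S mu) S" using assms unfolding memory_set_def by blast
  thus ?thesis unfolding mms_def by blast
qed

lemma ess_mms:
  fixes S :: "'g::group_add set" and mu :: "('g \<Rightarrow> 'a) \<Rightarrow> 'a"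
  assumes "ess S mu s" "s \<in> S"
  shows "s \<in> mms S mu"
  unfolding mms_def
proof (rule InterI, clarify)
  fix T assume mT: "memory_set (ca S mu) T"
  then obtain mu' where e: "ca T mu' = ca S mu" unfolding memory_set_def by blast
  obtain z b where z: "z \<in> S \<rightarrow>\<^sub>E (UNIV::'a set)" and d: "mu z \<noteq> mu (z(s:=b))"
    using assms(1) unfolding ess_def by blast
  have z2: "z(s:=b) \<in> S \<rightarrow>\<^sub>E (UNIV::'a set)" using z assms(2) by (auto simp: PiE_def extensional_def)
  have sh: "\<And>x::'g\<Rightarrow>'a. shift (- 0) x = x" "\<And>x::'g\<Rightarrow>'a. shift 0 x = x" by (simp_all add: shift_def)
  show "s \<in> T"
  proof (rule ccontr)
    assume "s \<notin> T"
    hence r: "restrict z T = restrict (z(s:=b)) T" by (auto simp: restrict_def)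
    have "ca S mu z 0 = mu z" using z by (simp add: ca_def sh restrict_PiE)
    moreover have "ca S mu (z(s:=b)) 0 = mu (z(s:=b))" using z2 by (simp add: ca_def sh restrict_PiE)
    moreover have "ca T mu' z 0 = ca T mu' (z(s:=b)) 0" by (simp add: ca_def sh r)
    ultimately show False using e d by metis
  qed
qed

lemma card_split:
  fixes Q :: "('g \<Rightarrow> 'a::finite) set"
  assumes "finite S" "s \<in> S" "Q \<subseteq> S \<rightarrow>\<^sub>E (UNIV::'a set)"
  shows "card Q = (\<Sum>w\<in>(S-{s}) \<rightarrow>\<^sub>E (UNIV::'a set). card {a. w(s:=a) \<in> Q})"
proof -
  let ?W = "(S-{s}) \<rightarrow>\<^sub>E (UNIV::'a set)"
  let ?g = "\<lambda>(w,a). w(s:=a)"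
  let ?Sg = "SIGMA w:?W. {a. w(s:=a) \<in> Q}"
  have inj: "inj_on ?g ?Sg"
  proof (rule inj_onI, clarify)
    fix w a w' a'
    assume w: "w \<in> ?W" and w': "w' \<in> ?W" and eq: "w(s:=a) = w'(s:=a')"
    have "a = a'" using fun_cong[OF eq, of s] by simp
    moreover have "w = w'"
    proof
      fix x show "w x = w' x"
      proof (cases "x = s")
        case True thus ?thesis using w w' by (auto simp: PiE_def extensional_def)
      next
        case False thus ?thesis using fun_cong[OF eq, of x] by simp
      qed
    qed
    ultimately show "w = w' \<and> a = a'" by simp
  qed
  have img: "?g ` ?Sg = Q"
  proof
    show "?g ` ?Sg \<subseteq> Q" by auto
  next
    show "Q \<subseteq> ?g ` ?Sg"
    proof
      fix z assume zQ: "z \<in> Q"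
      hence zP: "z \<in> S \<rightarrow>\<^sub>E (UNIV::'a set)" using assms(3) by blast
      have ez: "(restrict z (S-{s}))(s := z s) = z"
      proof
        fix x show "((restrict z (S-{s}))(s := z s)) x = z x"
          using zP by (cases "x = s") (auto simp: PiE_def extensional_def restrict_def)
      qed
      have "(restrict z (S-{s}), z s) \<in> ?Sg" using ez zQ by auto
      thus "z \<in> ?g ` ?Sg" using ez by (metis (no_types, lifting) case_prod_conv image_eqI)
    qed
  qed
  have "card Q = card ?Sg" using card_image[OF inj] img by simp
  also have "\<dots> = (\<Sum>w\<in>?W. card {a. w(s:=a) \<in> Q})"
    by (rule card_SigmaI) (simp_all add: finite_PiE assms(1))
  finally show ?thesis .
qed

lemma upd_PiE:
  assumes "w \<in> (S-{s}) \<rightarrow>\<^sub>E (UNIV::'a set)" "s \<in> S"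
  shows "w(s:=a) \<in> S \<rightarrow>\<^sub>E (UNIV::'a set)"
  using assms by (auto simp: PiE_def extensional_def)

lemma P_sub:
  assumes "generates P f S mu"
  shows "P \<subseteq> S \<rightarrow>\<^sub>E UNIV"
  using assms unfolding generates_def by blast

lemma not_ess_upd:
  assumes "\<not> ess S mu s" "z \<in> S \<rightarrow>\<^sub>E UNIV"
  shows "mu (z(s:=b)) = mu z"
  using assms unfolding ess_def by metis

lemma card_not_ess0:
  fixes S :: "'g::group_add set" and mu :: "('g \<Rightarrow> 'a::finite) \<Rightarrow> 'a"
  assumes "finite S" "0 \<in> S" "generates P f S mu" "\<not> ess S mu 0"
  shows "card P = CARD('a) ^ (card S - 1) * (CARD('a) - 1)"
proof -
  let ?W = "(S-{0}) \<rightarrow>\<^sub>E (UNIV::'a set)"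
  have PS: "P = {z \<in> S \<rightarrow>\<^sub>E (UNIV :: 'a set). mu z \<noteq> z 0}" using assms(3) unfolding generates_def by blast
  have "card P = (\<Sum>w\<in>?W. card {a. w(0:=a) \<in> P})"
    using card_split[OF assms(1,2) P_sub[OF assms(3)]] .
  also have "\<dots> = (\<Sum>w\<in>?W. CARD('a) - 1)"
  proof (rule sum.cong[OF refl])
    fix w assume w: "w \<in> ?W"
    obtain c where c: "c = mu (w(0:=undefined))" by blast
    have "{a. w(0:=a) \<in> P} = UNIV - {c}"
    proof -
      have ca: "\<And>a. mu (w(0:=a)) = c"
        using not_ess_upd[OF assms(4) upd_PiE[OF w assms(2)], of undefined] c by simp
      show ?thesis using upd_PiE[OF w assms(2)] unfolding PS by (auto simp: ca)
    qed
    thus "card {a. w(0:=a) \<in> P} = CARD('a) - 1" by (simp add: card_Diff_singleton)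
  qed
  also have "\<dots> = card ?W * (CARD('a) - 1)" by simp
  also have "card ?W = CARD('a) ^ (card S - 1)"
    using assms(1,2) by (simp add: card_PiE)
  finally show ?thesis .
qed

lemma dvd_not_ess:
  fixes S :: "'g::group_add set" and mu :: "('g \<Rightarrow> 'a::finite) \<Rightarrow> 'a"
  assumes "finite S" "s \<in> S" "s \<noteq> 0" "generates P f S mu" "\<not> ess S mu s"
  shows "CARD('a) dvd card P"
proof -
  let ?W = "(S-{s}) \<rightarrow>\<^sub>E (UNIV::'a set)"
  have PS: "P = {z \<in> S \<rightarrow>\<^sub>E (UNIV :: 'a set). mu z \<noteq> z 0}" using assms(4) unfolding generates_def by blast
  have "card P = (\<Sum>w\<in>?W. card {a. w(s:=a) \<in> P})"
    using card_split[OF assms(1,2) P_sub[OF assms(4)]] .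
  moreover have "CARD('a) dvd (\<Sum>w\<in>?W. card {a. w(s:=a) \<in> P})"
  proof (rule dvd_sum)
    fix w assume w: "w \<in> ?W"
    obtain c where c: "c = mu (w(s:=undefined))" by blast
    have ca: "\<And>a. mu (w(s:=a)) = c"
      using not_ess_upd[OF assms(5) upd_PiE[OF w assms(2)], of undefined] c by simp
    have "{a. w(s:=a) \<in> P} = (if c \<noteq> w 0 then UNIV else {})"
      using upd_PiE[OF w assms(2)] assms(3) unfolding PS by (auto simp: ca)
    thus "CARD('a) dvd card {a. w(s:=a) \<in> P}" by simp
  qed
  ultimately show ?thesis by simp
qed

lemma two_not_ess:
  fixes S :: "'g::group_add set" and mu :: "('g \<Rightarrow> 'a::finite) \<Rightarrow> 'a"
  assumes "finite S" "s \<in> S" "t \<in> S" "s \<noteq> 0" "t \<noteq> 0" "s \<noteq> t" "generates P f S mu"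
    "\<not> ess S mu s" "\<not> ess S mu t" "p \<in> P"
  shows "CARD('a) * CARD('a) \<le> card P"
proof -
  have PS: "P = {z \<in> S \<rightarrow>\<^sub>E (UNIV :: 'a set). mu z \<noteq> z 0}" using assms(7) unfolding generates_def by blast
  have fP: "finite P" by (rule finite_subset[OF P_sub[OF assms(7)]]) (simp add: finite_PiE assms(1))
  have pP: "p \<in> S \<rightarrow>\<^sub>E UNIV" "mu p \<noteq> p 0" using assms(10) PS by auto
  let ?h = "\<lambda>(a::'a,b::'a). p(s:=a, t:=b)"
  have inj: "inj_on ?h UNIV"
  proof (rule inj_onI, clarify)
    fix a b a' b' assume eq: "p(s:=a, t:=b) = p(s:=a', t:=b')"
    show "a = a' \<and> b = b'" using fun_cong[OF eq, of s] fun_cong[OF eq, of t] assms(6) by simp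
  qed
  have sub: "?h ` UNIV \<subseteq> P"
  proof clarify
    fix a b
    have m1: "p(s:=a) \<in> S \<rightarrow>\<^sub>E UNIV" using pP(1) assms(2) by (auto simp: PiE_def extensional_def)
    have m2: "p(s:=a, t:=b) \<in> S \<rightarrow>\<^sub>E UNIV" using m1 assms(3) by (auto simp: PiE_def extensional_def)
    have "mu (p(s:=a, t:=b)) = mu (p(s:=a))" using not_ess_upd[OF assms(9) m1] .
    also have "\<dots> = mu p" using not_ess_upd[OF assms(8) pP(1)] .
    finally show "p(s:=a, t:=b) \<in> P" using m2 pP(2) assms(4,5) unfolding PS by auto
  qed
  have "card (?h ` UNIV) = CARD('a) * CARD('a)"
    using card_image[OF inj] by (simp add: card_cartesian_product)
  thus ?thesis using card_mono[OF fP sub] by simp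
qed

theorem theorem1:
  fixes S :: "'g::group_add set"
    and mu :: "('g \<Rightarrow> 'a::finite) \<Rightarrow> 'a"
    and P :: "('g \<Rightarrow> 'a) set"
    and f :: "('g \<Rightarrow> 'a) \<Rightarrow> 'a"
  assumes "CARD('a) \<ge> 2"
    and "finite S" and "0 \<in> S" and "card S \<ge> 2"
    and "generates P f S mu"
  shows "(card P \<noteq> CARD('a) ^ card S - CARD('a) ^ (card S - 1) \<longrightarrow> 0 \<in> mms S mu)
    \<and> (\<not> CARD('a) dvd card P \<longrightarrow> mms S mu = S)
    \<and> (card S \<ge> 3 \<and> well_behaved P f \<and> card P = CARD('a) \<longrightarrow>
         mms S mu = S \<or> (\<exists>s \<in> S - {0}. mms S mu = S - {s}))"
proof -
  let ?n = "CARD('a)" and ?k = "card S"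
  have eqn: "?n ^ (?k - 1) * (?n - 1) = ?n ^ ?k - ?n ^ (?k - 1)"
  proof -
    have "?n ^ ?k = ?n ^ (?k - 1) * ?n" using assms(4)
      by (cases ?k) (auto simp: mult.commute)
    thus ?thesis by (simp add: diff_mult_distrib2)
  qed
  have c0: "\<not> ess S mu 0 \<Longrightarrow> card P = ?n ^ ?k - ?n ^ (?k - 1)"
    using card_not_ess0[OF assms(2,3,5)] eqn by simp
  have all: "(\<forall>s\<in>S. ess S mu s) \<Longrightarrow> mms S mu = S"
    using mms_sub[OF assms(2)] ess_mms by blast
  have p1: "card P \<noteq> ?n ^ ?k - ?n ^ (?k - 1) \<longrightarrow> 0 \<in> mms S mu"
    using c0 ess_mms assms(3) by blast
  have p2: "\<not> ?n dvd card P \<longrightarrow> mms S mu = S"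
  proof (intro impI all ballI)
    fix s assume nd: "\<not> ?n dvd card P" and s: "s \<in> S"
    show "ess S mu s"
    proof (rule ccontr)
      assume ne: "\<not> ess S mu s"
      show False
      proof (cases "s = 0")
        case True
        have "?n dvd ?n ^ (?k - 1) * (?n - 1)" using assms(4)
          by (simp add: dvd_power)
        thus False using card_not_ess0[OF assms(2,3,5)] ne True nd by simp
      next
        case False
        thus False using dvd_not_ess[OF assms(2) s False assms(5) ne] nd by simp
      qed
    qed
  qed
  have p3: "card S \<ge> 3 \<and> well_behaved P f \<and> card P = ?n \<longrightarrow>
         mms S mu = S \<or> (\<exists>s \<in> S - {0}. mms S mu = S - {s})"
  proof (intro impI)
    assume h: "card S \<ge> 3 \<and> well_behaved P f \<and> card P = ?n"
    have e0: "ess S mu 0"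
    proof (rule ccontr)
      assume "\<not> ess S mu 0"
      hence "card P = ?n ^ (?k - 1) * (?n - 1)" using card_not_ess0[OF assms(2,3,5)] by simp
      moreover have "?n ^ (?k - 1) * (?n - 1) \<ge> ?n ^ (?k - 1)" using assms(1) by simp
      moreover have "?n ^ (?k - 1) \<ge> ?n ^ 2" using h assms(1) by (intro power_increasing) auto
      moreover have "?n ^ 2 > ?n" using assms(1) by (simp add: power2_eq_square)
      ultimately show False using h by linarith
    qed
    show "mms S mu = S \<or> (\<exists>s \<in> S - {0}. mms S mu = S - {s})"
    proof (cases "\<forall>s\<in>S. ess S mu s")
      case True thus ?thesis using all by blast
    next
      case False
      then obtain s where s: "s \<in> S" "\<not> ess S mu s" by blast
      have s0: "s \<noteq> 0" using s e0 by blast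
      have others: "\<forall>t\<in>S - {s}. ess S mu t"
      proof (rule ballI, rule ccontr)
        fix t assume t: "t \<in> S - {s}" and nt: "\<not> ess S mu t"
        have t0: "t \<noteq> 0" using t nt e0 by blast
        have "P \<noteq> {}" using h assms(1) by auto
        then obtain p where "p \<in> P" by blast
        from two_not_ess[OF assms(2) s(1) _ s0 t0 _ assms(5) s(2) nt this] t
        have "?n * ?n \<le> card P" by blast
        thus False using h assms(1) by (simp add: power2_eq_square)
      qed
      have lo: "S - {s} \<subseteq> mms S mu" using others ess_mms by blast
      have up: "mms S mu \<subseteq> S" using mms_sub[OF assms(2)] .
      show ?thesis
      proof (cases "s \<in> mms S mu")
        case True hence "mms S mu = S" using lo up by blast
        thus ?thesis by blast
      next
        case False hence "mms S mu = S - {s}" using lo up by blast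
        thus ?thesis using s s0 by blast
      qed
    qed
  qed
  show ?thesis using p1 p2 p3 by blast
qed

end
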